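(* Let $\chi_1,\chi_2,\chi_{1'},\chi_{2'}$ be triples of nonzero complex numbers that are the octahedral colors of the segments $1,2,1',2'$ at a crossing of an octahedral coloring. Then: - $U(\chi_1)U(\chi_2)=U(\chi_{2'})U(\chi_{1'})$; - $D(\chi_1)D(\chi_2)=D(\chi_{2'})D(\chi_{1'})$; - if the crossing is positive, $D(\chi_1)U(\chi_2)=U(\chi_{2'})D(\chi_{1'})$; - if the crossing is negative, $U(\chi_1)D(\chi_2)=D(\chi_{2'})U(\chi_{1'})$. Consequently the assignment $x_i^+\mapsto U(\chi_i)$, $x_i^-\mapsto D(\chi_i)$ gives a well-defined representation (functor) $\mathrm{Hol}_\chi$ of the fundamental groupoid $\Pi(D)$ into $\mathrm{GL}_2(\mathbb{C})$.
   Context: Tangle diagrams and labels: $D$ is an oriented tangle diagram, viewed as a 4-valent graph. Segments are the edges of the graph and regions are the components of the complement. For a segment $i$, $i^{\uparrow}$ and $i^{\downarrow}$ are the regions on the left and right of $i$ respectively, with respect to its orientation. At a crossing, rotated so both strands point right, the incoming segments are $1$ (upper left) and $2$ (lower left), and the outgoing segments are $1'$ (lower right, continuing $1$) and $2'$ (upper right, continuing $2$). The crossing is positive if strand $1\to1'$ is over and negative if strand $2\to2'$ is over. Octahedral coloring: assign to each segment a triple $(a_i,b_i,m_i)$ of nonzero complex numbers with $m_{1'}=m_1$, $m_{2'}=m_2$ at each crossing, and: - at positive crossings, with $A=1-\frac{m_1b_1}{b_2}(1-\frac{a_1}{m_1})(1-\frac{1}{m_2a_2})$: $a_{1'}=a_1A^{-1}$,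 $a_{2'}=a_2A$, $b_{1'}=\frac{m_2b_2}{m_1}(1-m_2a_2(1-\frac{b_2}{m_1b_1}))^{-1}$, $b_{2'}=b_1(1-\frac{m_1}{a_1}(1-\frac{b_2}{m_1b_1}))$; - at negative crossings, with $\tilde A=1-\frac{b_2}{m_1b_1}(1-m_1a_1)(1-\frac{m_2}{a_2})$: $a_{1'}=a_1\tilde A^{-1}$, $a_{2'}=a_2\tilde A$, $b_{1'}=\frac{m_2b_2}{m_1}(1-\frac{a_2}{m_2}(1-\frac{m_1b_1}{b_2}))$, $b_{2'}=b_1(1-\frac{1}{m_1a_1}(1-\frac{m_1b_1}{b_2}))^{-1}$. Matrices: for $\chi=(a,b,m)$, \[ U(\chi)=\begin{bmatrix}a&0\\(a-1/m)/b&1\end{bmatrix},\qquad D(\chi)=\begin{bmatrix}1&(a-m)b\\0&a\end{bmatrix}. \] Products are ordinary matrix products. Fundamental groupoid $\Pi(D)$: objects are the regions of $D$. There are two generating morphisms $x_i^+,x_i^-:i^{\uparrow}\to i^{\downarrow}$ for each segment $i$, representing paths passing over and under the segment respectively. Composition is written left to right ($fg$ means $f$ then $g$). At each crossing there are the relations $x_1^+x_2^+=x_{2'}^+x_{1'}^+$ and $x_1^-x_2^-=x_{2'}^-x_{1'}^-$, together with $x_1^-x_2^+=x_{2'}^+x_{1'}^-$ at a positive crossing, or $x_1^+x_2^-=x_{2'}^-x_{1'}^+$ at a negative crossing. A representation sends a composite $fg$ to the matrix product in the same order. *)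

theory Defs
  imports "HOL-Analysis.Analysis"
begin

type_synonym color = "complex \<times> complex \<times> complex"

definition col_a :: "color \<Rightarrow> complex" where "col_a c = fst c"
definition col_b :: "color \<Rightarrow> complex" where "col_b c = fst (snd c)"
definition col_m :: "color \<Rightarrow> complex" where "col_m c = snd (snd c)"

definition nonzero_color :: "color \<Rightarrow> bool" where
  "nonzero_color c \<longleftrightarrow> col_a c \<noteq> 0 \<and> col_b c \<noteq> 0 \<and> col_m c \<noteq> 0"

definition mat2 :: "complex \<Rightarrow> complex \<Rightarrow> complex \<Rightarrow> complex \<Rightarrow> complex^2^2" where
  "mat2 p q r s = vector [vector [p, q], vector [r, s]]"

definition Umat :: "color \<Rightarrow> complex^2^2" where
  "Umat c = (let a = col_a c; b = col_b c; m = col_m c in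
     mat2 a 0 ((a - 1/m) / b) 1)"

definition Dmat :: "color \<Rightarrow> complex^2^2" where
  "Dmat c = (let a = col_a c; b = col_b c; m = col_m c in
     mat2 1 ((a - m) * b) 0 a)"

text \<open>Octahedral coloring relations at a positive crossing
  (incoming 1, 2; outgoing 1', 2').\<close>
definition pos_crossing_colors :: "color \<Rightarrow> color \<Rightarrow> color \<Rightarrow> color \<Rightarrow> bool" where
  "pos_crossing_colors c1 c2 c1' c2' \<longleftrightarrow>
    (let a1 = col_a c1; b1 = col_b c1; m1 = col_m c1;
         a2 = col_a c2; b2 = col_b c2; m2 = col_m c2;
         A = 1 - (m1 * b1 / b2) * (1 - a1 / m1) * (1 - 1 / (m2 * a2))
     in col_m c1' = m1 \<and> col_m c2' = m2 \<and>
        col_a c1' = a1 * inverse A \<and> col_a c2' = a2 * A \<and>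
        col_b c1' = (m2 * b2 / m1) * inverse (1 - m2 * a2 * (1 - b2 / (m1 * b1))) \<and>
        col_b c2' = b1 * (1 - (m1 / a1) * (1 - b2 / (m1 * b1))))"

definition neg_crossing_colors :: "color \<Rightarrow> color \<Rightarrow> color \<Rightarrow> color \<Rightarrow> bool" where
  "neg_crossing_colors c1 c2 c1' c2' \<longleftrightarrow>
    (let a1 = col_a c1; b1 = col_b c1; m1 = col_m c1;
         a2 = col_a c2; b2 = col_b c2; m2 = col_m c2;
         At = 1 - (b2 / (m1 * b1)) * (1 - m1 * a1) * (1 - m2 / a2)
     in col_m c1' = m1 \<and> col_m c2' = m2 \<and>
        col_a c1' = a1 * inverse At \<and> col_a c2' = a2 * At \<and>
        col_b c1' = (m2 * b2 / m1) * (1 - (a2 / m2) * (1 - m1 * b1 / b2)) \<and>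
        col_b c2' = b1 * inverse (1 - (1 / (m1 * a1)) * (1 - m1 * b1 / b2)))"

end

theory Submission imports Defs begin

lemma mat2_eq: "mat2 p q r s = mat2 p2 q2 r2 s2 \<longleftrightarrow> p = p2 \<and> q = q2 \<and> r = r2 \<and> s = s2"
  unfolding mat2_def by (auto simp: vec_eq_iff forall_2 vector_2)

lemma mat2_mult: "mat2 p q r s ** mat2 p2 q2 r2 s2 = mat2 (p * p2 + q * r2) (p * q2 + q * s2) (r * p2 + s * r2) (r * q2 + s * s2)"
  unfolding mat2_def by (auto simp: vec_eq_iff forall_2 vector_2 matrix_matrix_mult_def sum_2)

lemma mat2_inv: "p * s - q * r \<noteq> 0 \<Longrightarrow> invertible (mat2 p q r s)"
proof -
  assume h: "p * s - q * r \<noteq> 0"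
  have "det (mat2 p q r s) = p * s - q * r"
    unfolding mat2_def by (simp add: det_2 vector_2)
  thus ?thesis using h by (simp add: invertible_det_nz)
qed

theorem lemma3p3:
  fixes c1 c2 c1' c2' :: color and positive :: bool
  assumes "nonzero_color c1" "nonzero_color c2"
      and "nonzero_color c1'" "nonzero_color c2'"
      and "if positive then pos_crossing_colors c1 c2 c1' c2'
           else neg_crossing_colors c1 c2 c1' c2'"
  shows "Umat c1 ** Umat c2 = Umat c2' ** Umat c1'
       \<and> Dmat c1 ** Dmat c2 = Dmat c2' ** Dmat c1'
       \<and> (positive \<longrightarrow> Dmat c1 ** Umat c2 = Umat c2' ** Dmat c1')
       \<and> (\<not> positive \<longrightarrow> Umat c1 ** Dmat c2 = Dmat c2' ** Umat c1')
       \<and> (\<forall>c\<in>{c1, c2, c1', c2'}. invertible (Umat c) \<and> invertible (Dmat c))"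
proof -
  obtain a1 b1 m1 where C1: "c1 = (a1,b1,m1)" by (cases c1) auto
  obtain a2 b2 m2 where C2: "c2 = (a2,b2,m2)" by (cases c2) auto
  obtain a3 b3 m3 where C3: "c1' = (a3,b3,m3)" by (cases c1') auto
  obtain a4 b4 m4 where C4: "c2' = (a4,b4,m4)" by (cases c2') auto
  have nz: "a1 \<noteq> 0" "b1 \<noteq> 0" "m1 \<noteq> 0" "a2 \<noteq> 0" "b2 \<noteq> 0" "m2 \<noteq> 0"
     "a3 \<noteq> 0" "b3 \<noteq> 0" "m3 \<noteq> 0" "a4 \<noteq> 0" "b4 \<noteq> 0" "m4 \<noteq> 0"
    using assms(1-4) by (auto simp: C1 C2 C3 C4 nonzero_color_def col_a_def col_b_def col_m_def)
  have inv: "\<forall>c\<in>{c1, c2, c1', c2'}. invertible (Umat c) \<and> invertible (Dmat c)"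
    using nz by (auto simp: C1 C2 C3 C4 Umat_def Dmat_def col_a_def col_b_def col_m_def intro!: mat2_inv)
  show ?thesis
  proof (cases positive)
    case True
    define A where "A = 1 - (m1 * b1 / b2) * (1 - a1 / m1) * (1 - 1 / (m2 * a2))"
    have H: "m3 = m1" "m4 = m2" "a3 = a1 * inverse A" "a4 = a2 * A"
        "b3 = (m2 * b2 / m1) * inverse (1 - m2 * a2 * (1 - b2 / (m1 * b1)))"
        "b4 = b1 * (1 - (m1 / a1) * (1 - b2 / (m1 * b1)))"
      using assms(5) True by (simp_all add: pos_crossing_colors_def C1 C2 C3 C4 col_a_def col_b_def col_m_def Let_def A_def)
    define N where "N = b2 * m2 * a2 - b1 * (m1 - a1) * (m2 * a2 - 1)"
    define P where "P = m1 * b1 - m2 * a2 * (m1 * b1 - b2)"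
    define Q where "Q = a1 * b1 - m1 * b1 + b2"
    have AN: "A = N / (b2 * m2 * a2)" unfolding A_def N_def using nz by (simp add: field_simps)
    have EP: "1 - m2 * a2 * (1 - b2 / (m1 * b1)) = P / (m1 * b1)" unfolding P_def using nz by (simp add: field_simps)
    have FF: "1 - (m1 / a1) * (1 - b2 / (m1 * b1)) = Q / (a1 * b1)" unfolding Q_def using nz by (simp add: field_simps)
    have N0: "N \<noteq> 0" using nz H AN by auto
    have P0: "P \<noteq> 0" using nz H EP by auto
    have H3a: "a3 = a1 * b2 * m2 * a2 / N" using nz N0 by (simp add: H(3) AN field_simps)
    have H3b: "a4 = N / (b2 * m2)" using nz N0 by (simp add: H(4) AN field_simps)
    have H3c: "b3 = m2 * b2 * b1 / P" using nz P0 unfolding H(5) EP by (simp add: field_simps)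
    have "b4 = b1 * (Q / (a1 * b1))" unfolding H(6) FF ..
    moreover have "b1 * (Q / (a1 * b1)) = Q / a1" using nz by (simp add: field_simps)
    ultimately have H3d: "b4 = Q / a1" by simp
    note H3 = H3a H3b H3c H3d
    have Q0: "Q \<noteq> 0" using nz H3d by auto
    note nzs = nz(1-6) N0 P0 Q0
    have E: "Umat c1 ** Umat c2 = Umat c2' ** Umat c1'" "Dmat c1 ** Dmat c2 = Dmat c2' ** Dmat c1'"
        "Dmat c1 ** Umat c2 = Umat c2' ** Dmat c1'"
      unfolding C1 C2 C3 C4 H(1,2) H3 Umat_def Dmat_def col_a_def col_b_def col_m_def Let_def mat2_mult mat2_eq
      by (simp_all add: field_simps nzs) (unfold N_def P_def Q_def; algebra)+
    show ?thesis using True inv E by auto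
  next
    case False
    define A where "A = 1 - (b2 / (m1 * b1)) * (1 - m1 * a1) * (1 - m2 / a2)"
    have H: "m3 = m1" "m4 = m2" "a3 = a1 * inverse A" "a4 = a2 * A"
        "b3 = (m2 * b2 / m1) * (1 - (a2 / m2) * (1 - m1 * b1 / b2))"
        "b4 = b1 * inverse (1 - (1 / (m1 * a1)) * (1 - m1 * b1 / b2))"
      using assms(5) False by (simp_all add: neg_crossing_colors_def C1 C2 C3 C4 col_a_def col_b_def col_m_def Let_def A_def)
    define N where "N = m1 * b1 * a2 - b2 * (1 - m1 * a1) * (a2 - m2)"
    define P where "P = m1 * a1 * b2 - b2 + m1 * b1"
    define Q where "Q = m2 * b2 - a2 * (b2 - m1 * b1)"
    have AN: "A = N / (m1 * b1 * a2)" unfolding A_def N_def using nz by (simp add: field_simps)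
    have EP: "1 - (1 / (m1 * a1)) * (1 - m1 * b1 / b2) = P / (m1 * a1 * b2)" unfolding P_def using nz by (simp add: field_simps)
    have FF: "(m2 * b2 / m1) * (1 - (a2 / m2) * (1 - m1 * b1 / b2)) = Q / m1" unfolding Q_def using nz by (simp add: field_simps)
    have N0: "N \<noteq> 0" using nz H AN by auto
    have P0: "P \<noteq> 0" using nz H EP by auto
    have H3a: "a3 = a1 * m1 * b1 * a2 / N" using nz N0 by (simp add: H(3) AN field_simps)
    have H3b: "a4 = N / (m1 * b1)" using nz N0 by (simp add: H(4) AN field_simps)
    have H3c: "b3 = Q / m1" unfolding H(5) FF ..
    have H3d: "b4 = b1 * m1 * a1 * b2 / P" using nz P0 unfolding H(6) EP by (simp add: field_simps)
    note H3 = H3a H3b H3c H3d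
    have Q0: "Q \<noteq> 0" using nz H3c by auto
    note nzs = nz(1-6) N0 P0 Q0
    have E: "Umat c1 ** Umat c2 = Umat c2' ** Umat c1'" "Dmat c1 ** Dmat c2 = Dmat c2' ** Dmat c1'"
        "Umat c1 ** Dmat c2 = Dmat c2' ** Umat c1'"
      unfolding C1 C2 C3 C4 H(1,2) H3 Umat_def Dmat_def col_a_def col_b_def col_m_def Let_def mat2_mult mat2_eq
      by (simp_all add: field_simps nzs) (unfold N_def P_def Q_def; algebra)+
    show ?thesis using False inv E by auto
  qed
qed
end
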